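(* Let $h$ be a Hessenberg function on $\{1,\dots,n\}$. For $x^\alpha\in\mathcal{B}_h$, let $\Psi_h(x^\alpha)$ be the Level $n$ word of the $h$-tableau-tree lying directly above the leaf labelled $x^\alpha$. Then $\Psi_h$ is a well-defined map from $\mathcal{B}_h$ to the set of $(h,(n))$-fillings, it sends monomials of degree $r$ to fillings with exactly $r$ dimension pairs, and $\Phi(\Psi_h(x^\alpha))=x^\alpha$ for all $x^\alpha\in\mathcal{B}_h$; more precisely, for every $k\in\{2,\dots,n\}$, $|D^{\Psi_h(x^\alpha)}_k|=\alpha_k$.
   Context: A Hessenberg function is $h:\{1,\dots,n\}\to\{1,\dots,n\}$, $h_i=h(i)$, with $i\le h_i$ and $h_i\le h_{i+1}$; degree tuple $\beta_i=i-\#\{k:h_k<i\}$; $\mathcal{B}_h=\{x_1^{\alpha_1}\cdots x_n^{\alpha_n}:0\le\alpha_i\le\beta_i-1\}$. A word $u_1\cdots u_m$ of distinct numbers is $h$-permissible if $u_t\le h(u_{t+1})$ for all $t$; an $(h,(n))$-filling is an $h$-permissible permutation $T=w_1\cdots w_n$ of $1,\dots,n$ in one row. Dimension pairs of such $T$: $(a,b)$ with $b>a$, $b$ appearing to the left of $a$, and, if $a$ is immediately followed by $c$, $b\le h(c)$. $D^T_k$ is the set of dimension pairs $(a,k)$ and $\Phi(T)=\prod_{k=2}^n x_k^{|D^T_k|}$. The $h$-tableau-tree: Level 1 is the word $1$; a vertex at Level $i-1$ is an $h$-permissible word on $\{1,\dots,i-1\}$ whose $\beta_i$ bullet positions are the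 gaps where inserting $i$ keeps it $h$-permissible; its child along edge $x_i^j$ ($0\le j\le\beta_i-1$) inserts $i$ at the $(j+1)$-th bullet from the right. Each Level $n$ word has one leaf child (edge label $1$) labelled by the product of edge labels on its root path. *)

theory Defs
  imports Main
begin

text \<open>Hessenberg function on {1..n}; values of h outside {1..n} are irrelevant.\<close>
definition hessenberg :: "nat \<Rightarrow> (nat \<Rightarrow> nat) \<Rightarrow> bool" where
  "hessenberg n h \<longleftrightarrow>
     (\<forall>i\<in>{1..n}. i \<le> h i \<and> h i \<le> n) \<and> (\<forall>i\<in>{1..<n}. h i \<le> h (Suc i))"

definition hess_beta :: "nat \<Rightarrow> (nat \<Rightarrow> nat) \<Rightarrow> nat \<Rightarrow> nat" where
  "hess_beta n h i = i - card {k\<in>{1..n}. h k < i}"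

text \<open>Monomials x^alpha in B_h, represented by their exponent vectors alpha
  (alpha i = exponent of x_i, zero outside {1..n}).\<close>
definition hess_basis :: "nat \<Rightarrow> (nat \<Rightarrow> nat) \<Rightarrow> (nat \<Rightarrow> nat) set" where
  "hess_basis n h = {\<alpha>. (\<forall>i\<in>{1..n}. \<alpha> i \<le> hess_beta n h i - 1) \<and> (\<forall>i. i \<notin> {1..n} \<longrightarrow> \<alpha> i = 0)}"

definition permissible :: "(nat \<Rightarrow> nat) \<Rightarrow> nat list \<Rightarrow> bool" where
  "permissible h u \<longleftrightarrow> distinct u \<and> (\<forall>t. Suc t < length u \<longrightarrow> u ! t \<le> h (u ! Suc t))"

definition filling :: "nat \<Rightarrow> (nat \<Rightarrow> nat) \<Rightarrow> nat list \<Rightarrow> bool" where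
  "filling n h w \<longleftrightarrow> permissible h w \<and> set w = {1..n} \<and> length w = n"

definition dim_pairs :: "(nat \<Rightarrow> nat) \<Rightarrow> nat list \<Rightarrow> (nat \<times> nat) set" where
  "dim_pairs h w = {(a,b). \<exists>i j. i < j \<and> j < length w \<and> w ! i = b \<and> w ! j = a \<and> a < b \<and>
                          (Suc j < length w \<longrightarrow> b \<le> h (w ! Suc j))}"

definition dimD :: "(nat \<Rightarrow> nat) \<Rightarrow> nat list \<Rightarrow> nat \<Rightarrow> (nat \<times> nat) set" where
  "dimD h w k = {p\<in>dim_pairs h w. snd p = k}"

text \<open>Phi(T) = prod_{k=2}^n x_k^{|D_k|}, as exponent vector.\<close>
definition Phi :: "nat \<Rightarrow> (nat \<Rightarrow> nat) \<Rightarrow> nat list \<Rightarrow> nat \<Rightarrow> nat" where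
  "Phi n h w k = (if 2 \<le> k \<and> k \<le> n then card (dimD h w k) else 0)"

definition insert_at :: "nat \<Rightarrow> nat \<Rightarrow> nat list \<Rightarrow> nat list" where
  "insert_at p x w = take p w @ x # drop p w"

definition bullets :: "(nat \<Rightarrow> nat) \<Rightarrow> nat \<Rightarrow> nat list \<Rightarrow> nat list" where
  "bullets h i w = filter (\<lambda>p. permissible h (insert_at p i w)) [0..<Suc (length w)]"

text \<open>Child along edge x_i^j: insert i at the (j+1)-th bullet from the right.\<close>
definition tree_child :: "(nat \<Rightarrow> nat) \<Rightarrow> nat \<Rightarrow> nat \<Rightarrow> nat list \<Rightarrow> nat list" where
  "tree_child h i j w = insert_at (rev (bullets h i w) ! j) i w"

text \<open>Word at level k on the root path selected by the edge labels x_i^{alpha_i}.\<close>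
fun tree_word :: "(nat \<Rightarrow> nat) \<Rightarrow> (nat \<Rightarrow> nat) \<Rightarrow> nat \<Rightarrow> nat list" where
  "tree_word h \<alpha> 0 = []"
| "tree_word h \<alpha> (Suc 0) = [1]"
| "tree_word h \<alpha> (Suc (Suc k)) = tree_child h (Suc (Suc k)) (\<alpha> (Suc (Suc k))) (tree_word h \<alpha> (Suc k))"

definition Psi :: "nat \<Rightarrow> (nat \<Rightarrow> nat) \<Rightarrow> (nat \<Rightarrow> nat) \<Rightarrow> nat list" where
  "Psi n h \<alpha> = tree_word h \<alpha> n"

end

theory Submission
  imports Defs
begin


lemma insert_at_len: "p \<le> length w \<Longrightarrow> length (insert_at p x w) = Suc (length w)"
  by (simp add: insert_at_def)

lemma insert_at_set: "set (insert_at p x w) = insert x (set w)"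
proof -
  have "set w = set (take p w) \<union> set (drop p w)"
    by (metis append_take_drop_id set_append)
  then show ?thesis by (auto simp: insert_at_def)
qed

lemma insert_at_distinct: "distinct (insert_at p x w) \<longleftrightarrow> distinct w \<and> x \<notin> set w"
proof -
  have e: "distinct w = distinct (take p w @ drop p w)" by simp
  have s: "set w = set (take p w) \<union> set (drop p w)"
    by (metis append_take_drop_id set_append)
  show ?thesis unfolding insert_at_def e using s by (auto simp del: append_take_drop_id)
qed

lemma insert_at_nth:
  "p \<le> length w \<Longrightarrow> i < Suc (length w) \<Longrightarrow>
   insert_at p x w ! i = (if i < p then w!i else if i = p then x else w!(i-1))"
  by (auto simp: insert_at_def nth_append nth_Cons' min_def)

lemma perm_insert:
  assumes "permissible h w" "p \<le> length w" "x \<notin> set w" "\<forall>y\<in>set w. y \<le> h x"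
  shows "permissible h (insert_at p x w) \<longleftrightarrow> (p < length w \<longrightarrow> x \<le> h (w!p))"
proof
  assume a: "permissible h (insert_at p x w)"
  show "p < length w \<longrightarrow> x \<le> h (w!p)"
  proof
    assume "p < length w"
    with a have "insert_at p x w ! p \<le> h (insert_at p x w ! Suc p)"
      using assms(2) unfolding permissible_def by (simp add: insert_at_len)
    with \<open>p < length w\<close> show "x \<le> h (w!p)" using assms(2) by (simp add: insert_at_nth)
  qed
next
  assume b: "p < length w \<longrightarrow> x \<le> h (w!p)"
  have d: "distinct (insert_at p x w)" using assms unfolding permissible_def
    by (simp add: insert_at_distinct)
  have "insert_at p x w ! t \<le> h (insert_at p x w ! Suc t)" if t: "Suc t < Suc (length w)" for t
  proof -
    consider "Suc t < p" | "Suc t = p" | "t = p" | "t > p" by linarith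
    then show ?thesis
    proof cases
      case 1 then show ?thesis using assms(1,2) t by (simp add: insert_at_nth permissible_def)
    next
      case 2 then show ?thesis using assms(2,4) t by (simp add: insert_at_nth)
    next
      case 3 then show ?thesis using assms(2) b t by (simp add: insert_at_nth)
    next
      case 4
      then obtain t' where tt: "t = Suc t'" by (cases t) auto
      have "w ! (t-1) \<le> h (w ! Suc (t-1))" using assms(1) t unfolding permissible_def tt by simp
      moreover have "Suc (t-1) = t" using 4 by simp
      ultimately show ?thesis using assms(2) 4 t by (simp add: insert_at_nth)
    qed
  qed
  then show "permissible h (insert_at p x w)" using d assms(2)
    unfolding permissible_def by (simp add: insert_at_len)
qed

lemma sorted_count:
  "sorted_wrt (<) (xs::nat list) \<Longrightarrow> i < length xs \<Longrightarrow> card {g\<in>set xs. xs!i < g} = length xs - Suc i"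
proof (induction xs arbitrary: i)
  case Nil then show ?case by simp
next
  case (Cons a ys)
  show ?case
  proof (cases i)
    case 0
    have "{g\<in>set (a#ys). (a#ys)!i < g} = set ys" using Cons.prems 0 by auto
    moreover have "distinct ys" using Cons.prems(1) by (metis distinct.simps(2) list.sel(3) strict_sorted_iff)
    ultimately show ?thesis using 0 by (simp add: distinct_card)
  next
    case (Suc i')
    have "a < ys ! i'" using Cons.prems Suc by simp
    then have "{g\<in>set (a#ys). (a#ys)!i < g} = {g\<in>set ys. ys!i' < g}" using Suc by auto
    then show ?thesis using Cons Suc by simp
  qed
qed



lemma dimD_insert_old:
  assumes p: "p \<le> length w" and kx: "k < x" and khx: "k \<le> h x"
    and bp: "p < length w \<longrightarrow> k \<le> h (w!p)"
  shows "dimD h (insert_at p x w) k = dimD h w k"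
proof (rule set_eqI)
  fix q :: "nat \<times> nat"
  obtain a b where q: "q = (a,b)" by force
  let ?w = "insert_at p x w"
  have L: "length ?w = Suc (length w)" using p by (simp add: insert_at_len)
  have N1: "\<And>i. i < p \<Longrightarrow> ?w ! i = w!i" using p by (simp add: insert_at_nth)
  have N2: "?w ! p = x" using p by (simp add: insert_at_nth)
  have N3: "\<And>i. p < i \<Longrightarrow> i < Suc (length w) \<Longrightarrow> ?w ! i = w!(i-1)" using p by (simp add: insert_at_nth)
  show "q \<in> dimD h ?w k \<longleftrightarrow> q \<in> dimD h w k"
  proof
    assume "q \<in> dimD h ?w k"
    then obtain i j where ij: "i < j" "j < Suc (length w)" "?w ! i = k" "?w ! j = a" "a < k" "b = k"
      and c: "Suc j < Suc (length w) \<longrightarrow> k \<le> h (?w ! Suc j)"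
      unfolding dimD_def dim_pairs_def q L by auto
    have ip: "i \<noteq> p" using ij N2 kx by auto
    have jp: "j \<noteq> p" using ij N2 kx by auto
    define i' where "i' = (if i < p then i else i - 1)"
    define j' where "j' = (if j < p then j else j - 1)"
    have "i' < j'" using ij(1) ip jp unfolding i'_def j'_def by (simp split: if_split; linarith)
    have "j' < length w" using ij(2) jp p unfolding j'_def by (simp split: if_split; linarith)
    note \<open>i' < j'\<close> \<open>j' < length w\<close>
    moreover have "w ! i' = k"
    proof (cases "i < p")
      case True then show ?thesis using N1 ij unfolding i'_def by simp
    next
      case False then show ?thesis using N3[of i] ij ip unfolding i'_def by simp
    qed
    moreover have "w ! j' = a"
    proof (cases "j < p")
      case True then show ?thesis using N1 ij unfolding j'_def by simp
    next
      case False then show ?thesis using N3[of j] ij jp unfolding j'_def by simp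
    qed
    moreover have "Suc j' < length w \<longrightarrow> k \<le> h (w ! Suc j')"
    proof
      assume s: "Suc j' < length w"
      consider "Suc j < p" | "Suc j = p" | "j > p" using jp by linarith
      then show "k \<le> h (w ! Suc j')"
      proof cases
        case 1
        then have "j' = j" unfolding j'_def by simp
        then show ?thesis using c N1[of "Suc j"] s 1 by simp
      next
        case 2 then have "Suc j' = p" unfolding j'_def by simp
        then show ?thesis using bp s by simp
      next
        case 3
        then have "Suc j' = j" unfolding j'_def by auto
        then show ?thesis using c N3[of "Suc j"] s 3 by simp
      qed
    qed
    ultimately have "\<exists>i j. i < j \<and> j < length w \<and> w ! i = b \<and> w ! j = a \<and> a < b \<and>
                          (Suc j < length w \<longrightarrow> b \<le> h (w ! Suc j))"
      using ij(5,6) by (intro exI[of _ i'] exI[of _ j']) simp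
    then show "q \<in> dimD h w k" unfolding dimD_def dim_pairs_def q using ij(6) by simp
  next
    assume "q \<in> dimD h w k"
    then obtain i j where ij: "i < j" "j < length w" "w ! i = k" "w ! j = a" "a < k" "b = k"
      and c: "Suc j < length w \<longrightarrow> k \<le> h (w ! Suc j)"
      unfolding dimD_def dim_pairs_def q by auto
    define i' where "i' = (if i < p then i else Suc i)"
    define j' where "j' = (if j < p then j else Suc j)"
    have "i' < j'" "j' < length ?w" using ij L unfolding i'_def j'_def by auto
    moreover have "?w ! i' = k"
    proof (cases "i < p")
      case True then show ?thesis using N1 ij unfolding i'_def by simp
    next
      case False then show ?thesis using N3[of "Suc i"] ij unfolding i'_def by simp
    qed
    moreover have "?w ! j' = a"
    proof (cases "j < p")
      case True then show ?thesis using N1 ij unfolding j'_def by simp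
    next
      case False then show ?thesis using N3[of "Suc j"] ij unfolding j'_def by simp
    qed
    moreover have "Suc j' < length ?w \<longrightarrow> k \<le> h (?w ! Suc j')"
    proof
      assume s: "Suc j' < length ?w"
      consider "Suc j < p" | "Suc j = p" | "j \<ge> p" by linarith
      then show "k \<le> h (?w ! Suc j')"
      proof cases
        case 1 then have "j' = j" unfolding j'_def by simp
        then show ?thesis using c N1[of "Suc j"] 1 p by simp
      next
        case 2 then have "Suc j' = p" unfolding j'_def by simp
        then show ?thesis using khx N2 by simp
      next
        case 3 then have "j' = Suc j" unfolding j'_def by simp
        then show ?thesis using c N3[of "Suc (Suc j)"] s L 3 by simp
      qed
    qed
    ultimately have "\<exists>i j. i < j \<and> j < length ?w \<and> ?w ! i = b \<and> ?w ! j = a \<and> a < b \<and>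
                          (Suc j < length ?w \<longrightarrow> b \<le> h (?w ! Suc j))"
      using ij(5,6) by (intro exI[of _ i'] exI[of _ j']) simp
    then show "q \<in> dimD h ?w k" unfolding dimD_def dim_pairs_def q using ij(6) by simp
  qed
qed



lemma dimD_insert_new:
  assumes p: "p \<le> length w" and d: "distinct w" and xw: "\<forall>y\<in>set w. y < x"
  shows "card (dimD h (insert_at p x w) x) =
         card {g. p < g \<and> g \<le> length w \<and> (g < length w \<longrightarrow> x \<le> h (w!g))}"
proof -
  let ?w = "insert_at p x w"
  let ?G = "{g. p < g \<and> g \<le> length w \<and> (g < length w \<longrightarrow> x \<le> h (w!g))}"
  have L: "length ?w = Suc (length w)" using p by (simp add: insert_at_len)
  have N1: "\<And>i. i < p \<Longrightarrow> ?w ! i = w!i" using p by (simp add: insert_at_nth)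
  have N2: "?w ! p = x" using p by (simp add: insert_at_nth)
  have N3: "\<And>i. p < i \<Longrightarrow> i < Suc (length w) \<Longrightarrow> ?w ! i = w!(i-1)" using p by (simp add: insert_at_nth)
  have "dimD h ?w x = (\<lambda>g. (w!(g-1), x)) ` ?G"
  proof (rule set_eqI)
    fix q :: "nat \<times> nat"
    obtain a b where q: "q = (a,b)" by force
    show "q \<in> dimD h ?w x \<longleftrightarrow> q \<in> (\<lambda>g. (w!(g-1), x)) ` ?G"
    proof
      assume "q \<in> dimD h ?w x"
      then obtain i j where ij: "i < j" "j < Suc (length w)" "?w ! i = x" "?w ! j = a" "a < x" "b = x"
        and c: "Suc j < Suc (length w) \<longrightarrow> x \<le> h (?w ! Suc j)"
        unfolding dimD_def dim_pairs_def q L by auto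
      have "i = p"
      proof (rule ccontr)
        assume "i \<noteq> p"
        then have "?w ! i \<in> set w"
        proof (cases "i < p")
          case True then show ?thesis using N1[of i] ij p by (metis nth_mem order_less_le_trans)
        next
          case False
          then have "?w ! i = w ! (i-1)" using N3 \<open>i \<noteq> p\<close> ij by simp
          moreover have "i - 1 < length w" using ij by linarith
          ultimately show ?thesis by simp
        qed
        then show False using ij xw by auto
      qed
      then have pj: "p < j" using ij by simp
      have wj: "?w ! j = w!(j-1)" using N3 pj ij by simp
      have "Suc j < Suc (length w) \<longrightarrow> x \<le> h (w ! j)"
      proof
        assume "Suc j < Suc (length w)"
        then show "x \<le> h (w ! j)" using c N3[of "Suc j"] pj by simp
      qed
      then have "j \<in> ?G" using ij pj by simp
      moreover have "a = w!(j-1)" using ij wj by simp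
      ultimately show "q \<in> (\<lambda>g. (w!(g-1), x)) ` ?G" using q ij(6) by blast
    next
      assume "q \<in> (\<lambda>g. (w!(g-1), x)) ` ?G"
      then obtain g where g: "g \<in> ?G" "a = w!(g-1)" "b = x" using q by auto
      have pg: "p < g" "g < length ?w" using g L by auto
      have wg: "?w ! g = a" using N3 g pg L by simp
      have "g - 1 < length w" using g pg by (simp; linarith)
      then have ax: "a < x" using g xw by simp
      have "Suc g < length ?w \<longrightarrow> x \<le> h (?w ! Suc g)"
      proof
        assume "Suc g < length ?w"
        then show "x \<le> h (?w ! Suc g)" using g N3[of "Suc g"] pg L by simp
      qed
      then have "\<exists>i j. i < j \<and> j < length ?w \<and> ?w ! i = b \<and> ?w ! j = a \<and> a < b \<and>
                          (Suc j < length ?w \<longrightarrow> b \<le> h (?w ! Suc j))"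
        using pg wg ax N2 g(3) by (intro exI[of _ p] exI[of _ g]) simp
      then show "q \<in> dimD h ?w x" unfolding dimD_def dim_pairs_def q using g(3) by simp
    qed
  qed
  moreover have "inj_on (\<lambda>g. (w!(g-1), x)) ?G"
  proof (rule inj_onI)
    fix g1 g2 assume a: "g1 \<in> ?G" "g2 \<in> ?G" "(w!(g1-1), x) = (w!(g2-1), x)"
    then have "g1 - 1 = g2 - 1" using d nth_eq_iff_index_eq[of w "g1-1" "g2-1"] by (simp; linarith)
    then show "g1 = g2" using a(1,2) by (simp; linarith)
  qed
  ultimately show ?thesis by (simp add: card_image)
qed



lemma bullets_char:
  assumes "permissible h w" "x \<notin> set w" "\<forall>y\<in>set w. y \<le> h x"
  shows "bullets h x w = filter (\<lambda>g. g < length w \<longrightarrow> x \<le> h (w!g)) [0..<Suc (length w)]"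
  unfolding bullets_def
proof (rule filter_cong[OF refl])
  fix g assume "g \<in> set [0..<Suc (length w)]"
  then have "g \<le> length w" by auto
  then show "permissible h (insert_at g x w) = (g < length w \<longrightarrow> x \<le> h (w!g))"
    using perm_insert assms by blast
qed

lemma count_filter_nth:
  assumes "distinct w"
  shows "length (filter (\<lambda>g. P (w!g)) [0..<length w]) = card {c\<in>set w. P c}"
proof -
  have "length (filter (\<lambda>g. P (w!g)) [0..<length w]) = card {g. g < length w \<and> P (w!g)}"
    by (simp add: length_filter_conv_card cong: conj_cong)
  also have "\<dots> = card ((\<lambda>g. w!g) ` {g. g < length w \<and> P (w!g)})"
    using assms by (intro card_image[symmetric] inj_onI) (auto simp: nth_eq_iff_index_eq)
  also have "(\<lambda>g. w!g) ` {g. g < length w \<and> P (w!g)} = {c\<in>set w. P c}"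
    by (auto simp: in_set_conv_nth)
  finally show ?thesis .
qed

lemma bullets_length:
  assumes hs: "hessenberg n h" and m: "1 \<le> m" "m < n"
    and w: "permissible h w" "set w = {1..m}" "length w = m"
  shows "length (bullets h (Suc m) w) = hess_beta n h (Suc m)"
proof -
  have hx: "Suc m \<le> h (Suc m)" using hs m unfolding hessenberg_def by auto
  have bc: "bullets h (Suc m) w = filter (\<lambda>g. g < length w \<longrightarrow> Suc m \<le> h (w!g)) [0..<Suc (length w)]"
    using bullets_char[OF w(1)] w hx by auto
  have d: "distinct w" using w unfolding permissible_def by simp
  have "length (filter (\<lambda>g. g < length w \<longrightarrow> Suc m \<le> h (w!g)) [0..<Suc (length w)])
     = Suc (length (filter (\<lambda>g. Suc m \<le> h (w!g)) [0..<length w]))"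
  proof -
    have "filter (\<lambda>g. g < length w \<longrightarrow> Suc m \<le> h (w!g)) [0..<length w]
        = filter (\<lambda>g. Suc m \<le> h (w!g)) [0..<length w]"
      by (rule filter_cong) auto
    then show ?thesis by simp
  qed
  also have "\<dots> = Suc (card {c\<in>{1..m}. Suc m \<le> h c})"
    using count_filter_nth[OF d, of "\<lambda>c. Suc m \<le> h c"] w by simp
  finally have L: "length (bullets h (Suc m) w) = Suc (card {c\<in>{1..m}. Suc m \<le> h c})"
    using bc by simp
  have S: "{k\<in>{1..n}. h k < Suc m} = {c\<in>{1..m}. h c < Suc m}"
    using hs m unfolding hessenberg_def by force
  have "card {c\<in>{1..m}. Suc m \<le> h c} + card {c\<in>{1..m}. h c < Suc m} = m"
  proof -
    have "{c\<in>{1..m}. Suc m \<le> h c} \<union> {c\<in>{1..m}. h c < Suc m} = {1..m}" by auto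
    moreover have "{c\<in>{1..m}. Suc m \<le> h c} \<inter> {c\<in>{1..m}. h c < Suc m} = {}" by auto
    ultimately show ?thesis
      by (metis (no_types, lifting) card_Un_disjoint card_atLeastAtMost diff_Suc_1 finite_Un finite_atLeastAtMost)
  qed
  then show ?thesis unfolding hess_beta_def S L by linarith
qed



lemma beta_pos: "1 \<le> i \<Longrightarrow> hessenberg n h \<Longrightarrow> 1 \<le> hess_beta n h i"
proof -
  assume i: "1 \<le> i" and hs: "hessenberg n h"
  have "{k\<in>{1..n}. h k < i} \<subseteq> {1..<i}" using hs unfolding hessenberg_def by force
  then have "card {k\<in>{1..n}. h k < i} \<le> i - 1" by (metis card_atLeastLessThan card_mono finite_atLeastLessThan)
  then show ?thesis unfolding hess_beta_def using i by linarith
qed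

lemma main_inv:
  assumes hs: "hessenberg n h" and al: "\<alpha> \<in> hess_basis n h"
  shows "1 \<le> m \<Longrightarrow> m \<le> n \<Longrightarrow> permissible h (tree_word h \<alpha> m) \<and> set (tree_word h \<alpha> m) = {1..m}
     \<and> length (tree_word h \<alpha> m) = m \<and> (\<forall>k\<in>{2..m}. card (dimD h (tree_word h \<alpha> m) k) = \<alpha> k)"
proof (induction m)
  case 0 then show ?case by simp
next
  case (Suc m)
  show ?case
  proof (cases m)
    case 0
    then show ?thesis by (simp add: permissible_def)
  next
    case (Suc m')
    let ?w = "tree_word h \<alpha> m"
    let ?x = "Suc m"
    let ?bs = "bullets h ?x ?w"
    have IH: "permissible h ?w" "set ?w = {1..m}" "length ?w = m"
      "\<forall>k\<in>{2..m}. card (dimD h ?w k) = \<alpha> k" using Suc.IH Suc.prems Suc by auto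
    have hx: "?x \<le> h ?x" using hs Suc.prems unfolding hessenberg_def by auto
    have xw: "?x \<notin> set ?w" "\<forall>y\<in>set ?w. y \<le> h ?x" "\<forall>y\<in>set ?w. y < ?x" using IH hx by auto
    have d: "distinct ?w" using IH unfolding permissible_def by simp
    have bc: "?bs = filter (\<lambda>g. g < m \<longrightarrow> ?x \<le> h (?w!g)) [0..<Suc m]"
      using bullets_char[OF IH(1) xw(1,2)] IH(3) by simp
    have bl: "length ?bs = hess_beta n h ?x"
      using bullets_length[OF hs _ _ IH(1-3)] Suc Suc.prems by simp
    have "\<alpha> ?x \<le> hess_beta n h ?x - 1" using al Suc.prems unfolding hess_basis_def by auto
    moreover have "1 \<le> hess_beta n h ?x" using beta_pos hs by simp
    ultimately have jl: "\<alpha> ?x < length ?bs" using bl by linarith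
    define j where "j = \<alpha> ?x"
    define p where "p = rev ?bs ! j"
    have tw: "tree_word h \<alpha> ?x = insert_at p ?x ?w"
      using Suc by (simp add: tree_child_def p_def j_def)
    have pin: "p \<in> set ?bs" unfolding p_def j_def using jl by (simp add: rev_nth)
    then have pm: "p \<le> m" and bp: "p < m \<longrightarrow> ?x \<le> h (?w!p)" using bc by auto
    have perm: "permissible h (insert_at p ?x ?w)"
      using perm_insert[OF IH(1) _ xw(1,2)] pm IH(3) bp by simp
    have st: "set (insert_at p ?x ?w) = {1..?x}" using IH(2) by (auto simp: insert_at_set)
    have ln: "length (insert_at p ?x ?w) = ?x" using pm IH(3) by (simp add: insert_at_len)
    have old: "card (dimD h (insert_at p ?x ?w) k) = \<alpha> k" if k: "k \<in> {2..m}" for k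
    proof -
      have "dimD h (insert_at p ?x ?w) k = dimD h ?w k"
        using k hx bp pm IH(3) by (intro dimD_insert_old) auto
      then show ?thesis using IH(4) k by simp
    qed
    have new: "card (dimD h (insert_at p ?x ?w) ?x) = \<alpha> ?x"
    proof -
      have "card (dimD h (insert_at p ?x ?w) ?x) =
            card {g. p < g \<and> g \<le> length ?w \<and> (g < length ?w \<longrightarrow> ?x \<le> h (?w!g))}"
        using dimD_insert_new[OF _ d xw(3)] pm IH(3) by simp
      also have "{g. p < g \<and> g \<le> length ?w \<and> (g < length ?w \<longrightarrow> ?x \<le> h (?w!g))}
          = {g\<in>set ?bs. ?bs ! (length ?bs - Suc j) < g}"
      proof -
        have "p = ?bs ! (length ?bs - Suc j)" unfolding p_def using jl j_def by (simp add: rev_nth)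
        then show ?thesis using bc IH(3) by auto
      qed
      also have "card \<dots> = length ?bs - Suc (length ?bs - Suc j)"
      proof (rule sorted_count)
        have "sorted_wrt (<) (filter (\<lambda>g. g < m \<longrightarrow> ?x \<le> h (?w!g)) [0..<Suc m])"
          by (rule sorted_wrt_filter) (rule sorted_wrt_upt)
        then show "sorted_wrt (<) ?bs" using bc by simp
        show "length ?bs - Suc j < length ?bs" using jl j_def by simp
      qed
      also have "\<dots> = j" using jl j_def by simp
      finally show ?thesis unfolding j_def .
    qed
    have "\<forall>k\<in>{2..?x}. card (dimD h (insert_at p ?x ?w) k) = \<alpha> k"
      using old new by (metis atLeastAtMost_iff le_Suc_eq)
    then show ?thesis using perm st ln tw by simp
  qed
qed



theorem mainTheorem17:
  fixes n :: nat and h :: "nat \<Rightarrow> nat" and \<alpha> :: "nat \<Rightarrow> nat"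
  assumes "1 \<le> n" and "hessenberg n h" and "\<alpha> \<in> hess_basis n h"
  shows "(\<forall>i\<in>{2..n}. length (bullets h i (tree_word h \<alpha> (i - 1))) = hess_beta n h i)
    \<and> filling n h (Psi n h \<alpha>)
    \<and> card (dim_pairs h (Psi n h \<alpha>)) = (\<Sum>i\<in>{1..n}. \<alpha> i)
    \<and> Phi n h (Psi n h \<alpha>) = \<alpha>
    \<and> (\<forall>k\<in>{2..n}. card (dimD h (Psi n h \<alpha>) k) = \<alpha> k)"
proof -
  note I = main_inv[OF assms(2,3)]
  let ?W = "Psi n h \<alpha>"
  have W: "permissible h ?W" "set ?W = {1..n}" "length ?W = n"
    "\<forall>k\<in>{2..n}. card (dimD h ?W k) = \<alpha> k"
    using I[of n] assms(1) unfolding Psi_def by auto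
  have c1: "\<forall>i\<in>{2..n}. length (bullets h i (tree_word h \<alpha> (i - 1))) = hess_beta n h i"
  proof
    fix i assume i: "i \<in> {2..n}"
    then obtain m where m: "i = Suc m" "1 \<le> m" "m < n" by (cases i) auto
    have "permissible h (tree_word h \<alpha> m) \<and> set (tree_word h \<alpha> m) = {1..m} \<and> length (tree_word h \<alpha> m) = m"
      using I[of m] m by auto
    then show "length (bullets h i (tree_word h \<alpha> (i - 1))) = hess_beta n h i"
      using bullets_length[OF assms(2) m(2,3)] m(1) by simp
  qed
  have a0: "\<alpha> k = 0" if "k < 2 \<or> n < k" for k
  proof (cases "k = 1")
    case True
    have "hess_beta n h 1 \<le> 1" unfolding hess_beta_def by simp
    then show ?thesis using assms(1,3) True unfolding hess_basis_def by fastforce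
  next
    case False
    then show ?thesis using that assms(3) unfolding hess_basis_def by auto
  qed
  have phi: "Phi n h ?W = \<alpha>"
  proof
    fix k show "Phi n h ?W k = \<alpha> k"
      using W(4) a0[of k] unfolding Phi_def by auto
  qed
  have U: "dim_pairs h ?W = (\<Union>k\<in>{2..n}. dimD h ?W k)"
  proof
    show "dim_pairs h ?W \<subseteq> (\<Union>k\<in>{2..n}. dimD h ?W k)"
    proof
      fix q assume q: "q \<in> dim_pairs h ?W"
      then obtain a b i j where ab: "q = (a,b)" "i < j" "j < length ?W" "?W ! i = b" "?W ! j = a" "a < b"
        unfolding dim_pairs_def by blast
      have "a \<in> {1..n}" "b \<in> {1..n}" using ab W(2) by (metis nth_mem order.strict_trans)+
      then have "b \<in> {2..n}" using ab by auto
      then show "q \<in> (\<Union>k\<in>{2..n}. dimD h ?W k)" using q ab unfolding dimD_def by auto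
    qed
    show "(\<Union>k\<in>{2..n}. dimD h ?W k) \<subseteq> dim_pairs h ?W" unfolding dimD_def by auto
  qed
  have fin: "finite (dimD h ?W k)" for k
  proof -
    have "dimD h ?W k \<subseteq> set ?W \<times> set ?W"
      unfolding dimD_def dim_pairs_def by (auto intro: nth_mem)
    then show ?thesis by (rule finite_subset) simp
  qed
  have "card (dim_pairs h ?W) = (\<Sum>k\<in>{2..n}. card (dimD h ?W k))"
    unfolding U by (rule card_UN_disjoint) (simp_all add: fin, auto simp: dimD_def)
  also have "\<dots> = (\<Sum>k\<in>{2..n}. \<alpha> k)" using W(4) by simp
  also have "\<dots> = (\<Sum>k\<in>{1..n}. \<alpha> k)"
  proof -
    have "{1..n} = insert 1 {2..n}" using assms(1) by auto
    then show ?thesis using a0[of 1] by simp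
  qed
  finally have c3: "card (dim_pairs h ?W) = (\<Sum>i\<in>{1..n}. \<alpha> i)" .
  show ?thesis using c1 W c3 phi unfolding filling_def by simp
qed


end
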